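(* Let $\mathcal{C},\mathcal{D}$ be categories and $F:\mathcal{C}\to\mathcal{D}$ a functor. Assume that $\mathcal{D}$ is essentially small and that there exists a cardinal $\kappa$ such that $\mathcal{C}$ has products indexed by any set of cardinality $\kappa$, while $|\mathcal{D}(d',d)|\leq\kappa$ for all objects $d',d$ of $\mathcal{D}$. Then: (1) for any two parallel morphisms $f,g:c'\to c$ in $\mathcal{C}$ we have $F(f)=F(g)$; (2) if $\mathcal{C}$ is strongly connected, then $F$ is isomorphic to a constant functor.
   Context: A category is essentially small if it is equivalent to a small category. A category is strongly connected if for any two objects $c,c'$ the hom-set $\mathcal{C}(c,c')$ is non-empty. *)

theory Defs
  imports Main
begin

record ('o, 'a) category =
  Obj  :: "'o set"
  Arr  :: "'a set"
  Dom  :: "'a \<Rightarrow> 'o"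
  Cod  :: "'a \<Rightarrow> 'o"
  Id   :: "'o \<Rightarrow> 'a"
  Comp :: "'a \<Rightarrow> 'a \<Rightarrow> 'a"   (* Comp C g f = g \<circ> f *)

definition hom :: "('o, 'a) category \<Rightarrow> 'o \<Rightarrow> 'o \<Rightarrow> 'a set" where
  "hom C x y = {f \<in> Arr C. Dom C f = x \<and> Cod C f = y}"

definition category :: "('o, 'a) category \<Rightarrow> bool" where
  "category C \<longleftrightarrow>
     (\<forall>f \<in> Arr C. Dom C f \<in> Obj C \<and> Cod C f \<in> Obj C) \<and>
     (\<forall>x \<in> Obj C. Id C x \<in> hom C x x) \<and>
     (\<forall>x \<in> Obj C. \<forall>y \<in> Obj C. \<forall>z \<in> Obj C. \<forall>f \<in> hom C x y. \<forall>g \<in> hom C y z.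
        Comp C g f \<in> hom C x z) \<and>
     (\<forall>x \<in> Obj C. \<forall>y \<in> Obj C. \<forall>f \<in> hom C x y.
        Comp C (Id C y) f = f \<and> Comp C f (Id C x) = f) \<and>
     (\<forall>w \<in> Obj C. \<forall>x \<in> Obj C. \<forall>y \<in> Obj C. \<forall>z \<in> Obj C.
        \<forall>f \<in> hom C w x. \<forall>g \<in> hom C x y. \<forall>h \<in> hom C y z.
        Comp C h (Comp C g f) = Comp C (Comp C h g) f)"

definition "functor" ::
  "('o, 'a) category \<Rightarrow> ('p, 'b) category \<Rightarrow> ('o \<Rightarrow> 'p) \<Rightarrow> ('a \<Rightarrow> 'b) \<Rightarrow> bool" where
  "functor C D Fo Fa \<longleftrightarrow> category C \<and> category D \<and>
     (\<forall>x \<in> Obj C. Fo x \<in> Obj D) \<and>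
     (\<forall>x \<in> Obj C. \<forall>y \<in> Obj C. \<forall>f \<in> hom C x y. Fa f \<in> hom D (Fo x) (Fo y)) \<and>
     (\<forall>x \<in> Obj C. Fa (Id C x) = Id D (Fo x)) \<and>
     (\<forall>x \<in> Obj C. \<forall>y \<in> Obj C. \<forall>z \<in> Obj C. \<forall>f \<in> hom C x y. \<forall>g \<in> hom C y z.
        Fa (Comp C g f) = Comp D (Fa g) (Fa f))"

definition iso_arr :: "('o, 'a) category \<Rightarrow> 'a \<Rightarrow> bool" where
  "iso_arr C f \<longleftrightarrow> f \<in> Arr C \<and>
     (\<exists>g \<in> hom C (Cod C f) (Dom C f).
        Comp C g f = Id C (Dom C f) \<and> Comp C f g = Id C (Cod C f))"

definition nat_iso ::
  "('o, 'a) category \<Rightarrow> ('p, 'b) category \<Rightarrow> ('o \<Rightarrow> 'p) \<Rightarrow> ('a \<Rightarrow> 'b)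
     \<Rightarrow> ('o \<Rightarrow> 'p) \<Rightarrow> ('a \<Rightarrow> 'b) \<Rightarrow> ('o \<Rightarrow> 'b) \<Rightarrow> bool" where
  "nat_iso C D Go Ga Ho Ha \<eta> \<longleftrightarrow>
     functor C D Go Ga \<and> functor C D Ho Ha \<and>
     (\<forall>x \<in> Obj C. \<eta> x \<in> hom D (Go x) (Ho x) \<and> iso_arr D (\<eta> x)) \<and>
     (\<forall>x \<in> Obj C. \<forall>y \<in> Obj C. \<forall>f \<in> hom C x y.
        Comp D (\<eta> y) (Ga f) = Comp D (Ha f) (\<eta> x))"

definition isomorphic_functors ::
  "('o, 'a) category \<Rightarrow> ('p, 'b) category \<Rightarrow> ('o \<Rightarrow> 'p) \<Rightarrow> ('a \<Rightarrow> 'b)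
     \<Rightarrow> ('o \<Rightarrow> 'p) \<Rightarrow> ('a \<Rightarrow> 'b) \<Rightarrow> bool" where
  "isomorphic_functors C D Go Ga Ho Ha \<longleftrightarrow> (\<exists>\<eta>. nat_iso C D Go Ga Ho Ha \<eta>)"

definition const_obj :: "'p \<Rightarrow> 'o \<Rightarrow> 'p" where
  "const_obj d = (\<lambda>_. d)"

definition const_arr :: "('p, 'b) category \<Rightarrow> 'p \<Rightarrow> 'a \<Rightarrow> 'b" where
  "const_arr D d = (\<lambda>_. Id D d)"

definition iso_to_constant_functor ::
  "('o, 'a) category \<Rightarrow> ('p, 'b) category \<Rightarrow> ('o \<Rightarrow> 'p) \<Rightarrow> ('a \<Rightarrow> 'b) \<Rightarrow> bool" where
  "iso_to_constant_functor C D Fo Fa \<longleftrightarrow>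
     (\<exists>d \<in> Obj D. isomorphic_functors C D Fo Fa (const_obj d) (const_arr D d))"

definition is_product ::
  "('o, 'a) category \<Rightarrow> 'i set \<Rightarrow> ('i \<Rightarrow> 'o) \<Rightarrow> 'o \<Rightarrow> ('i \<Rightarrow> 'a) \<Rightarrow> bool" where
  "is_product C K X P p \<longleftrightarrow> P \<in> Obj C \<and> (\<forall>i \<in> K. p i \<in> hom C P (X i)) \<and>
     (\<forall>c \<in> Obj C. \<forall>f. (\<forall>i \<in> K. f i \<in> hom C c (X i)) \<longrightarrow>
        (\<exists>!h. h \<in> hom C c P \<and> (\<forall>i \<in> K. Comp C (p i) h = f i)))"

definition has_products_indexed_by :: "('o, 'a) category \<Rightarrow> 'i set \<Rightarrow> bool" where
  "has_products_indexed_by C K \<longleftrightarrow>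
     (\<forall>X. (\<forall>i \<in> K. X i \<in> Obj C) \<longrightarrow> (\<exists>P p. is_product C K X P p))"

definition card_le :: "'x set \<Rightarrow> 'i set \<Rightarrow> bool" where
  "card_le A K \<longleftrightarrow> (\<exists>f. inj_on f A \<and> f ` A \<subseteq> K)"

definition strongly_connected :: "('o, 'a) category \<Rightarrow> bool" where
  "strongly_connected C \<longleftrightarrow> (\<forall>c \<in> Obj C. \<forall>c' \<in> Obj C. hom C c c' \<noteq> {})"

end

theory Submission
  imports Defs
begin

lemma no_inj_Pow:
  assumes "inj_on \<phi> (Pow K)" "\<phi> ` Pow K \<subseteq> K"
  shows False
proof -
  define g where "g k = (if k \<in> \<phi> ` Pow K then inv_into (Pow K) \<phi> k else {})" for k
  have "g ` K = Pow K"
  proof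
    show "g ` K \<subseteq> Pow K"
    proof
      fix A assume "A \<in> g ` K"
      then obtain k where k: "A = g k" by blast
      show "A \<in> Pow K"
      proof (cases "k \<in> \<phi> ` Pow K")
        case True
        then have "A = inv_into (Pow K) \<phi> k" using k g_def by simp
        then show ?thesis using inv_into_into[OF True] by simp
      next
        case False
        then show ?thesis using k g_def by simp
      qed
    qed
  next
    show "Pow K \<subseteq> g ` K"
    proof
      fix A assume A: "A \<in> Pow K"
      hence "g (\<phi> A) = A" using assms(1) g_def by (simp add: inv_into_f_f)
      moreover have "\<phi> A \<in> K" using A assms(2) by auto
      ultimately show "A \<in> g ` K" by (metis image_eqI)
    qed
  qed
  thus False using Cantors_theorem[of K] by blast
qed

lemma functor_facts:
  assumes "functor C D Fo Fa"
  shows "category C" "category D"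
    "\<And>x. x \<in> Obj C \<Longrightarrow> Fo x \<in> Obj D"
    "\<And>x y u. x \<in> Obj C \<Longrightarrow> y \<in> Obj C \<Longrightarrow> u \<in> hom C x y \<Longrightarrow> Fa u \<in> hom D (Fo x) (Fo y)"
    "\<And>x. x \<in> Obj C \<Longrightarrow> Fa (Id C x) = Id D (Fo x)"
    "\<And>x y z u v. x \<in> Obj C \<Longrightarrow> y \<in> Obj C \<Longrightarrow> z \<in> Obj C \<Longrightarrow> u \<in> hom C x y \<Longrightarrow> v \<in> hom C y z
     \<Longrightarrow> Fa (Comp C v u) = Comp D (Fa v) (Fa u)"
  using assms unfolding functor_def by simp_all

lemma category_facts:
  assumes "category C"
  shows "\<And>x. x \<in> Obj C \<Longrightarrow> Id C x \<in> hom C x x"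
    "\<And>x y z u v. x \<in> Obj C \<Longrightarrow> y \<in> Obj C \<Longrightarrow> z \<in> Obj C \<Longrightarrow> u \<in> hom C x y \<Longrightarrow> v \<in> hom C y z
     \<Longrightarrow> Comp C v u \<in> hom C x z"
    "\<And>x y u. x \<in> Obj C \<Longrightarrow> y \<in> Obj C \<Longrightarrow> u \<in> hom C x y \<Longrightarrow> Comp C (Id C y) u = u"
  using assms unfolding category_def by simp_all

lemma part1:
  fixes C :: "('o, 'a) category" and D :: "('p, 'b) category"
    and Fo :: "'o \<Rightarrow> 'p" and Fa :: "'a \<Rightarrow> 'b"
    and K :: "'i set"
  assumes F: "functor C D Fo Fa"
    and prod: "\<And>J :: 'i set. (\<exists>h. bij_betw h J K) \<Longrightarrow> has_products_indexed_by C J"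
    and homs: "\<And>d' d. d' \<in> Obj D \<Longrightarrow> d \<in> Obj D \<Longrightarrow> card_le (hom D d' d) K"
    and c': "c' \<in> Obj C" and c: "c \<in> Obj C" and f: "f \<in> hom C c' c" and g: "g \<in> hom C c' c"
  shows "Fa f = Fa g"
proof (rule ccontr)
  assume ne: "Fa f \<noteq> Fa g"
  have "has_products_indexed_by C K" using prod[of K] bij_betw_id by blast
  then obtain P p where P: "is_product C K (\<lambda>_. c) P p"
    using \<open>has_products_indexed_by C K\<close>[unfolded has_products_indexed_by_def, rule_format, of "\<lambda>_. c"] c by blast
  have Pd: "P \<in> Obj C \<and> (\<forall>i \<in> K. p i \<in> hom C P c) \<and>
     (\<forall>x \<in> Obj C. \<forall>f. (\<forall>i \<in> K. f i \<in> hom C x c) \<longrightarrow>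
        (\<exists>!h. h \<in> hom C x P \<and> (\<forall>i \<in> K. Comp C (p i) h = f i)))"
    using P unfolding is_product_def .
  have PO: "P \<in> Obj C" using Pd by (rule conjunct1)
  have pi: "\<And>i. i \<in> K \<Longrightarrow> p i \<in> hom C P c" using Pd by blast
  define fA where "fA A = (\<lambda>i. if i \<in> A then f else g)" for A :: "'i set"
  define H where "H A = (SOME h. h \<in> hom C c' P \<and> (\<forall>i \<in> K. Comp C (p i) h = fA A i))" for A
  have HA: "H A \<in> hom C c' P \<and> (\<forall>i \<in> K. Comp C (p i) (H A) = fA A i)" for A
  proof -
    have "\<forall>i \<in> K. fA A i \<in> hom C c' c" using f g unfolding fA_def by auto
    then have "\<exists>h. h \<in> hom C c' P \<and> (\<forall>i \<in> K. Comp C (p i) h = fA A i)"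
      using Pd[THEN conjunct2, THEN conjunct2, rule_format, OF c', of "fA A"] ex1_implies_ex by blast
    then show ?thesis unfolding H_def by (rule someI_ex)
  qed
  have Fcomp: "\<And>x y z u v. x \<in> Obj C \<Longrightarrow> y \<in> Obj C \<Longrightarrow> z \<in> Obj C \<Longrightarrow> u \<in> hom C x y \<Longrightarrow> v \<in> hom C y z
     \<Longrightarrow> Fa (Comp C v u) = Comp D (Fa v) (Fa u)"
    by (rule functor_facts(6)[OF F])
  have Fhom: "\<And>x y u. x \<in> Obj C \<Longrightarrow> y \<in> Obj C \<Longrightarrow> u \<in> hom C x y \<Longrightarrow> Fa u \<in> hom D (Fo x) (Fo y)"
    by (rule functor_facts(4)[OF F])
  have FoO: "\<And>x. x \<in> Obj C \<Longrightarrow> Fo x \<in> Obj D" by (rule functor_facts(3)[OF F])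
  have inj: "inj_on (\<lambda>A. Fa (H A)) (Pow K)"
  proof (rule inj_onI)
    fix A B assume A: "A \<in> Pow K" and B: "B \<in> Pow K" and eq: "Fa (H A) = Fa (H B)"
    show "A = B"
    proof (rule ccontr)
      assume "A \<noteq> B"
      have "\<exists>i. (i \<in> A) \<noteq> (i \<in> B)"
      proof (rule ccontr)
        assume "\<not> (\<exists>i. (i \<in> A) \<noteq> (i \<in> B))"
        then have "A = B" by auto
        then show False using \<open>A \<noteq> B\<close> by simp
      qed
      then obtain i where i2: "(i \<in> A) \<noteq> (i \<in> B)" by blast
      have i: "i \<in> K" "(i \<in> A) \<noteq> (i \<in> B)" using i2 A B by auto
      have "Fa (Comp C (p i) (H A)) = Comp D (Fa (p i)) (Fa (H A))"
        using Fcomp[OF c' PO c HA[THEN conjunct1] pi[OF i(1)]] .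
      moreover have "Fa (Comp C (p i) (H B)) = Comp D (Fa (p i)) (Fa (H B))"
        using Fcomp[OF c' PO c HA[THEN conjunct1] pi[OF i(1)]] .
      ultimately have "Fa (fA A i) = Fa (fA B i)" using HA[of A] HA[of B] i(1) eq by simp
      then show False using i(2) ne unfolding fA_def by (auto split: if_splits)
    qed
  qed
  have sub: "(\<lambda>A. Fa (H A)) ` Pow K \<subseteq> hom D (Fo c') (Fo P)"
    using HA Fhom[OF c' PO] by (simp add: image_subset_iff)
  obtain \<psi> where psi: "inj_on \<psi> (hom D (Fo c') (Fo P))" "\<psi> ` hom D (Fo c') (Fo P) \<subseteq> K"
    using homs[OF FoO[OF c'] FoO[OF PO]] unfolding card_le_def by blast
  have "inj_on (\<psi> \<circ> (\<lambda>A. Fa (H A))) (Pow K)"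
    by (rule comp_inj_on[OF inj inj_on_subset[OF psi(1) sub]])
  moreover have "(\<psi> \<circ> (\<lambda>A. Fa (H A))) ` Pow K \<subseteq> K" using sub psi(2) by auto
  ultimately show False by (rule no_inj_Pow)
qed

theorem theorem2p3:
  fixes C :: "('o, 'a) category" and D :: "('p, 'b) category"
    and Fo :: "'o \<Rightarrow> 'p" and Fa :: "'a \<Rightarrow> 'b"
    and K :: "'i set"
  assumes F: "functor C D Fo Fa"
    and prod: "\<And>J :: 'i set. (\<exists>h. bij_betw h J K) \<Longrightarrow> has_products_indexed_by C J"
    and homs: "\<And>d' d. d' \<in> Obj D \<Longrightarrow> d \<in> Obj D \<Longrightarrow> card_le (hom D d' d) K"
  shows "(\<forall>c' \<in> Obj C. \<forall>c \<in> Obj C. \<forall>f \<in> hom C c' c. \<forall>g \<in> hom C c' c. Fa f = Fa g)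
       \<and> (strongly_connected C \<and> Obj C \<noteq> {} \<longrightarrow> iso_to_constant_functor C D Fo Fa)"
proof -
  have P1: "\<forall>c' \<in> Obj C. \<forall>c \<in> Obj C. \<forall>f \<in> hom C c' c. \<forall>g \<in> hom C c' c. Fa f = Fa g"
  proof (intro ballI)
    fix c' c f g assume "c' \<in> Obj C" "c \<in> Obj C" "f \<in> hom C c' c" "g \<in> hom C c' c"
    then show "Fa f = Fa g"
      apply -
      apply (rule part1[OF F, where c'=c' and c=c])
         apply (rule prod, assumption)
        apply (rule homs, assumption, assumption)
       apply assumption+
      done
  qed
  have CC: "category C" and CD: "category D" using functor_facts(1,2)[OF F] by auto
  have Fcomp: "\<And>x y z u v. x \<in> Obj C \<Longrightarrow> y \<in> Obj C \<Longrightarrow> z \<in> Obj C \<Longrightarrow> u \<in> hom C x y \<Longrightarrow> v \<in> hom C y z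
     \<Longrightarrow> Fa (Comp C v u) = Comp D (Fa v) (Fa u)"
    by (rule functor_facts(6)[OF F])
  have Fhom: "\<And>x y u. x \<in> Obj C \<Longrightarrow> y \<in> Obj C \<Longrightarrow> u \<in> hom C x y \<Longrightarrow> Fa u \<in> hom D (Fo x) (Fo y)"
    by (rule functor_facts(4)[OF F])
  have FId: "\<And>x. x \<in> Obj C \<Longrightarrow> Fa (Id C x) = Id D (Fo x)" by (rule functor_facts(5)[OF F])
  have FoO: "\<And>x. x \<in> Obj C \<Longrightarrow> Fo x \<in> Obj D" by (rule functor_facts(3)[OF F])
  have Ccomp: "\<And>x y z u v. x \<in> Obj C \<Longrightarrow> y \<in> Obj C \<Longrightarrow> z \<in> Obj C \<Longrightarrow> u \<in> hom C x y \<Longrightarrow> v \<in> hom C y z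
     \<Longrightarrow> Comp C v u \<in> hom C x z" by (rule category_facts(2)[OF CC])
  have CId: "\<And>x. x \<in> Obj C \<Longrightarrow> Id C x \<in> hom C x x" by (rule category_facts(1)[OF CC])
  have DId: "\<And>x. x \<in> Obj D \<Longrightarrow> Id D x \<in> hom D x x" by (rule category_facts(1)[OF CD])
  have DIdl: "\<And>x y u. x \<in> Obj D \<Longrightarrow> y \<in> Obj D \<Longrightarrow> u \<in> hom D x y \<Longrightarrow> Comp D (Id D y) u = u"
    by (rule category_facts(3)[OF CD])
  have P2: "iso_to_constant_functor C D Fo Fa" if sc: "strongly_connected C" and ne: "Obj C \<noteq> {}"
  proof -
    obtain c0 where c0: "c0 \<in> Obj C" using ne by blast
    define d where "d = Fo c0"
    have dO: "d \<in> Obj D" using FoO[OF c0] d_def by simp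
    define u where "u x = (SOME a. a \<in> hom C x c0)" for x
    define v where "v x = (SOME a. a \<in> hom C c0 x)" for x
    have u: "u x \<in> hom C x c0" if "x \<in> Obj C" for x
    proof -
      have "hom C x c0 \<noteq> {}" using sc that c0 unfolding strongly_connected_def by simp
      then obtain a where "a \<in> hom C x c0" by blast
      then show ?thesis unfolding u_def by (rule someI)
    qed
    have v: "v x \<in> hom C c0 x" if "x \<in> Obj C" for x
    proof -
      have "hom C c0 x \<noteq> {}" using sc that c0 unfolding strongly_connected_def by simp
      then obtain a where "a \<in> hom C c0 x" by blast
      then show ?thesis unfolding v_def by (rule someI)
    qed
    define \<eta> where "\<eta> x = Fa (u x)" for x
    have idid: "Comp D (Id D d) (Id D d) = Id D d" using DIdl[OF dO dO DId[OF dO]] .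
    have F2: "functor C D (const_obj d) (const_arr D d)"
      unfolding functor_def const_obj_def const_arr_def
    proof (intro conjI ballI)
      show "category C" by (rule CC)
      show "category D" by (rule CD)
    qed (use dO DId[OF dO] idid in simp_all)
    have "nat_iso C D Fo Fa (const_obj d) (const_arr D d) \<eta>"
      unfolding nat_iso_def
    proof (intro conjI ballI)
      show "functor C D Fo Fa" by (rule F)
      show "functor C D (const_obj d) (const_arr D d)" by (rule F2)
    next
      fix x assume x: "x \<in> Obj C"
      show eh: "\<eta> x \<in> hom D (Fo x) (const_obj d x)"
        unfolding \<eta>_def const_obj_def d_def using Fhom[OF x c0 u[OF x]] .
      show "iso_arr D (\<eta> x)"
        unfolding iso_arr_def
      proof (intro conjI bexI)
        show "\<eta> x \<in> Arr D" using eh unfolding hom_def by simp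
        have dc: "Dom D (\<eta> x) = Fo x" "Cod D (\<eta> x) = d" using eh unfolding hom_def const_obj_def by auto
        show "Fa (v x) \<in> hom D (Cod D (\<eta> x)) (Dom D (\<eta> x))"
          unfolding dc d_def using Fhom[OF c0 x v[OF x]] .
        have "Comp D (Fa (v x)) (\<eta> x) = Fa (Comp C (v x) (u x))"
          unfolding \<eta>_def using Fcomp[OF x c0 x u[OF x] v[OF x]] by simp
        also have "\<dots> = Fa (Id C x)"
          using P1[rule_format, OF x x Ccomp[OF x c0 x u[OF x] v[OF x]] CId[OF x]] .
        finally show "Comp D (Fa (v x)) (\<eta> x) = Id D (Dom D (\<eta> x))" using FId[OF x] dc by simp
        have "Comp D (\<eta> x) (Fa (v x)) = Fa (Comp C (u x) (v x))"
          unfolding \<eta>_def using Fcomp[OF c0 x c0 v[OF x] u[OF x]] by simp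
        also have "\<dots> = Fa (Id C c0)"
          using P1[rule_format, OF c0 c0 Ccomp[OF c0 x c0 v[OF x] u[OF x]] CId[OF c0]] .
        finally show "Comp D (\<eta> x) (Fa (v x)) = Id D (Cod D (\<eta> x))" using FId[OF c0] dc d_def by simp
      qed
    next
      fix x y f assume x: "x \<in> Obj C" and y: "y \<in> Obj C" and f: "f \<in> hom C x y"
      have "Comp D (\<eta> y) (Fa f) = Fa (Comp C (u y) f)"
        unfolding \<eta>_def using Fcomp[OF x y c0 f u[OF y]] by simp
      also have "\<dots> = Fa (u x)"
        using P1[rule_format, OF x c0 Ccomp[OF x y c0 f u[OF y]] u[OF x]] .
      also have "\<dots> = Comp D (Id D d) (\<eta> x)"
        using DIdl[OF FoO[OF x] dO] Fhom[OF x c0 u[OF x]] unfolding \<eta>_def d_def by simp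
      finally show "Comp D (\<eta> y) (Fa f) = Comp D (const_arr D d f) (\<eta> x)"
        unfolding const_arr_def .
    qed
    then have "isomorphic_functors C D Fo Fa (const_obj d) (const_arr D d)"
      unfolding isomorphic_functors_def by (rule exI[where x=\<eta>])
    then show ?thesis unfolding iso_to_constant_functor_def using dO by (rule bexI)
  qed
  show ?thesis
  proof (intro conjI impI)
    show "\<forall>c' \<in> Obj C. \<forall>c \<in> Obj C. \<forall>f \<in> hom C c' c. \<forall>g \<in> hom C c' c. Fa f = Fa g"
      by (rule P1)
  next
    assume H: "strongly_connected C \<and> Obj C \<noteq> {}"
    show "iso_to_constant_functor C D Fo Fa"
      by (rule P2[OF H[THEN conjunct1] H[THEN conjunct2]])
  qed
qed

end
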